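(* Let $f,g\in\mathbb{C}[t]$ be nonzero univariate polynomials, let $t=\theta_1+\theta_2$ in $D_2$ (where $\theta_i=y_i\partial_{y_i}$), and let $P_1,P_2,Q_1,Q_2\in\mathbb{C}[s_1,s_2]$ be bivariate polynomials with $\deg f+\deg Q_i=\deg g+\deg P_i$ ($i=1,2$), none of whose principal symbols (as operators $P_i(\theta),Q_i(\theta)$) vanish along $y_1z_1+y_2z_2=0$, and satisfying \[[\,y_1P_1(\theta),\,y_2P_2(\theta)\,]=0,\qquad Q_2(\theta+e_2)\,Q_1(\theta+e_1+e_2)=Q_1(\theta+e_1)\,Q_2(\theta+e_1+e_2).\] Let $U_i=f(t)Q_i(\theta)-y_i\,g(t)P_i(\theta)$ for $i=1,2$ and $\Psi=y_1Q_2(\theta)P_1(\theta)-y_2Q_1(\theta)P_2(\theta)$. Then $R(f,g)\,\Psi$ lies in the left ideal $(U_1,U_2)\subseteq D_2$, where $R(f,g)$ is the resultant of $f$ and $g$.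
   Context: $D_2$ is the Weyl algebra in $y_1,y_2,\partial_{y_1},\partial_{y_2}$; $\theta=(\theta_1,\theta_2)$, and for a polynomial $P$, $P(\theta+e_i)$ denotes the polynomial $P$ with its $i$-th argument shifted by $1$; $[\cdot,\cdot]$ is the commutator. The principal symbol of an operator lives in $\mathbb{C}[y_1,y_2,z_1,z_2]$. *)

theory Defs
  imports "HOL-Library.Poly_Mapping" "Subresultants.Resultant_Prelim"
begin

text \<open>Elements of the Weyl algebra D_2 over the complex numbers, in normally ordered form:
  the finitely supported map c represents the sum over (a1,a2,b1,b2) of
  c(a1,a2,b1,b2) * y1^a1 y2^a2 d1^b1 d2^b2  (d_i = partial derivative in y_i).\<close>

type_synonym weyl = "(nat \<times> nat \<times> nat \<times> nat) \<Rightarrow>\<^sub>0 complex"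

type_synonym bipoly = "(nat \<times> nat) \<Rightarrow>\<^sub>0 complex"

text \<open>Product of two normally ordered monomials, via the Leibniz rule
  d^b y^c = sum_k (b choose k) (c choose k) k! y^(c-k) d^(b-k) in each variable.\<close>
definition wmono_mult :: "nat \<times> nat \<times> nat \<times> nat \<Rightarrow> nat \<times> nat \<times> nat \<times> nat \<Rightarrow> complex \<Rightarrow> weyl" where
  "wmono_mult p q r = (case p of (a1, a2, b1, b2) \<Rightarrow> case q of (c1, c2, d1, d2) \<Rightarrow>
     (\<Sum>k1\<in>{..min b1 c1}. \<Sum>k2\<in>{..min b2 c2}.
        Poly_Mapping.single (a1 + c1 - k1, a2 + c2 - k2, b1 + d1 - k1, b2 + d2 - k2)
          (r * of_nat ((b1 choose k1) * (c1 choose k1) * fact k1)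
             * of_nat ((b2 choose k2) * (c2 choose k2) * fact k2))))"

definition wmult :: "weyl \<Rightarrow> weyl \<Rightarrow> weyl" (infixl \<open>\<star>\<close> 70) where
  "wmult c d = (\<Sum>p\<in>Poly_Mapping.keys c. \<Sum>q\<in>Poly_Mapping.keys d. wmono_mult p q (Poly_Mapping.lookup c p * Poly_Mapping.lookup d q))"

definition wscale :: "complex \<Rightarrow> weyl \<Rightarrow> weyl" where
  "wscale r c = (\<Sum>p\<in>Poly_Mapping.keys c. Poly_Mapping.single p (r * Poly_Mapping.lookup c p))"

definition wone :: weyl where "wone = Poly_Mapping.single (0, 0, 0, 0) 1"

primrec wpow :: "weyl \<Rightarrow> nat \<Rightarrow> weyl" where
  "wpow c 0 = wone"
| "wpow c (Suc n) = c \<star> wpow c n"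

definition wy1 :: weyl where "wy1 = Poly_Mapping.single (1, 0, 0, 0) 1"
definition wy2 :: weyl where "wy2 = Poly_Mapping.single (0, 1, 0, 0) 1"

definition theta1 :: weyl where "theta1 = Poly_Mapping.single (1, 0, 1, 0) 1"
definition theta2 :: weyl where "theta2 = Poly_Mapping.single (0, 1, 0, 1) 1"

definition bieval :: "bipoly \<Rightarrow> weyl \<Rightarrow> weyl \<Rightarrow> weyl" where
  "bieval P x1 x2 = (\<Sum>(i, j)\<in>Poly_Mapping.keys P. wscale (Poly_Mapping.lookup P (i, j)) (wpow x1 i \<star> wpow x2 j))"

definition ueval :: "complex poly \<Rightarrow> weyl \<Rightarrow> weyl" where
  "ueval f x = (\<Sum>k\<le>degree f. wscale (coeff f k) (wpow x k))"

definition bideg :: "bipoly \<Rightarrow> nat" where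
  "bideg P = Max ((\<lambda>(i, j). i + j) ` Poly_Mapping.keys P \<union> {0})"

text \<open>Order of an operator (total degree in y and d of its normally ordered form) and its
  principal symbol in C[y1,y2,z1,z2], viewed as a polynomial function.\<close>
definition word :: "weyl \<Rightarrow> nat" where
  "word c = Max ((\<lambda>(a1, a2, b1, b2). a1 + a2 + b1 + b2) ` Poly_Mapping.keys c \<union> {0})"

definition psymb :: "weyl \<Rightarrow> complex \<Rightarrow> complex \<Rightarrow> complex \<Rightarrow> complex \<Rightarrow> complex" where
  "psymb c y1 y2 z1 z2 =
     (\<Sum>(a1, a2, b1, b2)\<in>{m\<in>Poly_Mapping.keys c. (case m of (a1, a2, b1, b2) \<Rightarrow> a1 + a2 + b1 + b2) = word c}.
        Poly_Mapping.lookup c (a1, a2, b1, b2) * y1 ^ a1 * y2 ^ a2 * z1 ^ b1 * z2 ^ b2)"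

definition left_ideal2 :: "weyl \<Rightarrow> weyl \<Rightarrow> weyl set" where
  "left_ideal2 u v = {a \<star> u + b \<star> v | a b. True}"

end

theory Submission imports Defs "Subresultants.Subresultant_Gcd" "HOL-Computational_Algebra.Field_as_Ring"
  "HOL-Computational_Algebra.Formal_Power_Series" begin

definition ff :: "complex \<Rightarrow> nat \<Rightarrow> complex" where
  "ff x n = (\<Prod>i<n. x - of_nat i)"

lemma ff_0[simp]: "ff x 0 = 1" by (simp add: ff_def)
lemma ff_Suc: "ff x (Suc n) = ff x n * (x - of_nat n)" by (simp add: ff_def)

lemma ff_add: "ff x (d + m) = ff x d * ff (x - of_nat d) m"
  by (induction m) (simp_all add: ff_Suc algebra_simps)

lemma ff_gchoose: "ff x n = fact n * (x gchoose n)"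
  by (simp add: ff_def gbinomial_prod_rev atLeast0LessThan)

lemma ff_nat: "ff (of_nat c) k = of_nat ((c choose k) * fact k)"
  unfolding ff_gchoose binomial_gbinomial[symmetric] by (simp add: mult.commute)

lemma ff_vandermonde: "ff (a + b) n = (\<Sum>k\<le>n. of_nat (n choose k) * ff a k * ff b (n - k))"
proof -
  have "ff (a + b) n = fact n * (\<Sum>k\<le>n. (a gchoose k) * (b gchoose (n - k)))"
    using gbinomial_Vandermonde[of a b n] by (simp add: ff_gchoose atLeast0AtMost)
  also have "\<dots> = (\<Sum>k\<le>n. of_nat (n choose k) * ff a k * ff b (n - k))"
    unfolding sum_distrib_left
  proof (rule sum.cong[OF refl])
    fix k assume "k \<in> {..n}"
    hence kn: "k \<le> n" by simp
    show "fact n * ((a gchoose k) * (b gchoose (n - k))) = of_nat (n choose k) * ff a k * ff b (n - k)"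
      unfolding binomial_fact[OF kn] ff_gchoose by (simp add: field_simps)
  qed
  finally show ?thesis .
qed

lemma ff_nat_zero: "m < n \<Longrightarrow> ff (of_nat m) n = 0"
  unfolding ff_nat using binomial_eq_0[of m n] by simp

lemma ff_nat_nonzero: "n \<le> m \<Longrightarrow> ff (of_nat m) n \<noteq> 0"
  unfolding ff_nat using zero_less_binomial[of n m] by simp

lemma one_dim:
  "(\<Sum>k\<le>min b c. of_nat ((b choose k) * (c choose k) * fact k) *
       ff (x - of_nat (a + c - k) + of_nat (b + d - k)) (b + d - k))
   = ff (x - of_nat a + of_nat b) b * ff (x - of_nat a + of_nat b - of_nat c + of_nat d) d"
proof -
  define w where "w = x - of_nat a + of_nat b - of_nat c"
  have "(\<Sum>k\<le>min b c. of_nat ((b choose k) * (c choose k) * fact k) *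
       ff (x - of_nat (a + c - k) + of_nat (b + d - k)) (b + d - k))
      = (\<Sum>k\<le>min b c. ff (w + of_nat d) d * (of_nat (b choose k) * ff (of_nat c) k * ff w (b - k)))"
  proof (rule sum.cong[OF refl])
    fix k assume "k \<in> {..min b c}"
    hence kb: "k \<le> b" and kc: "k \<le> c" by auto
    have e1: "x - of_nat (a + c - k) + of_nat (b + d - k) = w + of_nat d"
      using kb kc by (simp add: w_def of_nat_diff)
    have e2: "b + d - k = d + (b - k)" using kb by simp
    show "of_nat ((b choose k) * (c choose k) * fact k) *
       ff (x - of_nat (a + c - k) + of_nat (b + d - k)) (b + d - k)
      = ff (w + of_nat d) d * (of_nat (b choose k) * ff (of_nat c) k * ff w (b - k))"
      unfolding e1 unfolding e2 ff_add ff_nat by simp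
  qed
  also have "\<dots> = ff (w + of_nat d) d * (\<Sum>k\<le>b. of_nat (b choose k) * ff (of_nat c) k * ff w (b - k))"
    unfolding sum_distrib_left[symmetric]
  proof (rule arg_cong[where f="\<lambda>s. _ * s"], rule sum.mono_neutral_left)
    show "\<forall>i\<in>{..b} - {..min b c}. of_nat (b choose i) * ff (of_nat c) i * ff w (b - i) = 0"
      by (auto simp: ff_nat_zero)
  qed auto
  also have "\<dots> = ff (w + of_nat d) d * ff (of_nat c + w) b"
    by (simp add: ff_vandermonde)
  finally show ?thesis by (simp add: w_def algebra_simps)
qed

definition mcoef :: "nat \<times> nat \<times> nat \<times> nat \<Rightarrow> complex \<times> complex \<Rightarrow> complex" where
  "mcoef p x = (case p of (a1, a2, b1, b2) \<Rightarrow>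
     ff (fst x - of_nat a1 + of_nat b1) b1 * ff (snd x - of_nat a2 + of_nat b2) b2)"

definition mpt :: "nat \<times> nat \<times> nat \<times> nat \<Rightarrow> complex \<times> complex \<Rightarrow> complex \<times> complex" where
  "mpt p x = (case p of (a1, a2, b1, b2) \<Rightarrow>
     (fst x - of_nat a1 + of_nat b1, snd x - of_nat a2 + of_nat b2))"

definition act :: "weyl \<Rightarrow> (complex \<times> complex \<Rightarrow> complex) \<Rightarrow> complex \<times> complex \<Rightarrow> complex" where
  "act c u x = (\<Sum>p\<in>Poly_Mapping.keys c. Poly_Mapping.lookup c p * (mcoef p x * u (mpt p x)))"

lemma act_superset:
  assumes "finite S" "Poly_Mapping.keys c \<subseteq> S"
  shows "act c u x = (\<Sum>p\<in>S. Poly_Mapping.lookup c p * (mcoef p x * u (mpt p x)))"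
  unfolding act_def using assms by (intro sum.mono_neutral_left) (auto simp: in_keys_iff)

lemma act_add: "act (c + d) u x = act c u x + act d u x"
proof -
  let ?S = "Poly_Mapping.keys c \<union> Poly_Mapping.keys d"
  have "act (c + d) u x = (\<Sum>p\<in>?S. Poly_Mapping.lookup (c + d) p * (mcoef p x * u (mpt p x)))"
    by (rule act_superset) (auto simp: keys_add)
  also have "\<dots> = act c u x + act d u x"
    by (simp add: act_superset[of ?S c] act_superset[of ?S d] lookup_add distrib_right sum.distrib)
  finally show ?thesis .
qed

lemma act_diff: "act (c - d) u x = act c u x - act d u x"
proof -
  let ?S = "Poly_Mapping.keys c \<union> Poly_Mapping.keys d"
  have "act (c - d) u x = (\<Sum>p\<in>?S. Poly_Mapping.lookup (c - d) p * (mcoef p x * u (mpt p x)))"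
    by (rule act_superset) (auto simp: in_keys_iff lookup_minus)
  also have "\<dots> = act c u x - act d u x"
    by (simp add: act_superset[of ?S c] act_superset[of ?S d] lookup_minus left_diff_distrib sum_subtractf)
  finally show ?thesis .
qed

lemma act_zero[simp]: "act 0 u x = 0" by (simp add: act_def)

lemma act_uminus: "act (- c) u x = - act c u x"
  using act_diff[of 0 c u x] by simp

lemma act_single: "act (Poly_Mapping.single p r) u x = r * (mcoef p x * u (mpt p x))"
  by (subst act_superset[of "{p}"]) (auto simp: lookup_single)

lemma act_sum: "act (\<Sum>i\<in>I. f i) u x = (\<Sum>i\<in>I. act (f i) u x)"
proof (cases "finite I")
  case True thus ?thesis by (induction I rule: finite_induct) (simp_all add: act_add)
qed simp

lemma act_wmono:
  "act (wmono_mult (a1, a2, b1, b2) (c1, c2, d1, d2) r) u x =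
    r * (mcoef (a1, a2, b1, b2) x * (mcoef (c1, c2, d1, d2) (mpt (a1, a2, b1, b2) x) *
      u (mpt (c1, c2, d1, d2) (mpt (a1, a2, b1, b2) x))))"
proof -
  obtain x1 x2 where x: "x = (x1, x2)" by (cases x)
  define P where "P = (x1 - of_nat a1 + of_nat b1 - of_nat c1 + of_nat d1,
                       x2 - of_nat a2 + of_nat b2 - of_nat c2 + of_nat d2)"
  define T1 where "T1 k = of_nat ((b1 choose k) * (c1 choose k) * fact k) *
     ff (x1 - of_nat (a1 + c1 - k) + of_nat (b1 + d1 - k)) (b1 + d1 - k)" for k
  define T2 where "T2 k = of_nat ((b2 choose k) * (c2 choose k) * fact k) *
     ff (x2 - of_nat (a2 + c2 - k) + of_nat (b2 + d2 - k)) (b2 + d2 - k)" for k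
  have "act (wmono_mult (a1, a2, b1, b2) (c1, c2, d1, d2) r) u x =
     (\<Sum>k1\<le>min b1 c1. \<Sum>k2\<le>min b2 c2. r * (T1 k1 * T2 k2) * u P)"
    unfolding wmono_mult_def
    apply (simp add: act_sum act_single mcoef_def mpt_def x)
    apply (intro sum.cong refl)
    apply (simp add: T1_def T2_def P_def of_nat_diff)
    apply (simp add: algebra_simps)
    done
  also have "\<dots> = r * (\<Sum>k1\<le>min b1 c1. T1 k1) * (\<Sum>k2\<le>min b2 c2. T2 k2) * u P"
    by (simp add: sum_product sum_distrib_left sum_distrib_right mult_ac)
  also have "\<dots> = r * (mcoef (a1, a2, b1, b2) x * (mcoef (c1, c2, d1, d2) (mpt (a1, a2, b1, b2) x) *
      u (mpt (c1, c2, d1, d2) (mpt (a1, a2, b1, b2) x))))"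
    unfolding T1_def T2_def one_dim by (simp add: mcoef_def mpt_def x P_def mult_ac)
  finally show ?thesis .
qed

lemma act_wmono':
  "act (wmono_mult p q r) u x = r * (mcoef p x * (mcoef q (mpt p x) * u (mpt q (mpt p x))))"
  by (cases p; cases q) (simp only: act_wmono)

lemma act_mult: "act (c \<star> d) u x = act c (act d u) x"
proof -
  have "act (c \<star> d) u x = (\<Sum>p\<in>Poly_Mapping.keys c. \<Sum>q\<in>Poly_Mapping.keys d.
      Poly_Mapping.lookup c p * Poly_Mapping.lookup d q * (mcoef p x * (mcoef q (mpt p x) * u (mpt q (mpt p x)))))"
    unfolding wmult_def by (simp add: act_sum act_wmono')
  also have "\<dots> = act c (act d u) x"
    unfolding act_def[of c] act_def[of d] by (simp add: sum_distrib_left mult_ac)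
  finally show ?thesis .
qed

lemma act_eq_zero:
  assumes "\<And>u x. act c u x = 0"
  shows "c = 0"
proof (rule ccontr)
  assume "c \<noteq> 0"
  hence ne: "Poly_Mapping.keys c \<noteq> {}" by simp
  define h where "h = (\<lambda>p::nat \<times> nat \<times> nat \<times> nat. fst (snd (snd p)) + snd (snd (snd p)))"
  define m where "m = Min (h ` Poly_Mapping.keys c)"
  have "m \<in> h ` Poly_Mapping.keys c" unfolding m_def using ne by (intro Min_in) auto
  then obtain p0 where p0: "p0 \<in> Poly_Mapping.keys c" "h p0 = m" by auto
  have minp: "h p0 \<le> h p" if "p \<in> Poly_Mapping.keys c" for p
    unfolding p0(2) m_def using that by (intro Min_le) auto
  obtain a1 a2 b1 b2 where p0e: "p0 = (a1, a2, b1, b2)" by (cases p0) auto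
  define u where "u = (\<lambda>y::complex \<times> complex. if y = (of_nat b1, of_nat b2) then (1::complex) else 0)"
  define x where "x = ((of_nat a1, of_nat a2) :: complex \<times> complex)"
  have "act c u x = (\<Sum>p\<in>Poly_Mapping.keys c. if p = p0 then Poly_Mapping.lookup c p0 * mcoef p0 x else 0)"
    unfolding act_def
  proof (rule sum.cong[OF refl])
    fix p assume pk: "p \<in> Poly_Mapping.keys c"
    show "Poly_Mapping.lookup c p * (mcoef p x * u (mpt p x)) =
          (if p = p0 then Poly_Mapping.lookup c p0 * mcoef p0 x else 0)"
    proof (cases "p = p0")
      case True thus ?thesis by (simp add: p0e u_def x_def mpt_def)
    next
      case False
      obtain a1' a2' b1' b2' where pe: "p = (a1', a2', b1', b2')" by (cases p) auto
      have "mcoef p x * u (mpt p x) = 0"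
      proof (rule ccontr)
        assume nz: "mcoef p x * u (mpt p x) \<noteq> 0"
        hence "mpt p x = (of_nat b1, of_nat b2)" by (auto simp: u_def split: if_splits)
        hence e1: "(of_nat a1 - of_nat a1' + of_nat b1' :: complex) = of_nat b1"
          and e2: "(of_nat a2 - of_nat a2' + of_nat b2' :: complex) = of_nat b2"
          by (simp_all add: mpt_def pe x_def)
        have "(of_nat (a1 + b1') :: complex) = of_nat (b1 + a1')" using e1 by (simp add: algebra_simps)
        hence n1: "a1 + b1' = b1 + a1'" by (simp only: of_nat_eq_iff)
        have "(of_nat (a2 + b2') :: complex) = of_nat (b2 + a2')" using e2 by (simp add: algebra_simps)
        hence n2: "a2 + b2' = b2 + a2'" by (simp only: of_nat_eq_iff)
        have mc: "mcoef p x = ff (of_nat b1) b1' * ff (of_nat b2) b2'"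
          using e1 e2 by (simp add: mcoef_def pe x_def)
        from nz mc have "ff (of_nat b1) b1' \<noteq> 0" "ff (of_nat b2) b2' \<noteq> 0" by auto
        hence "b1' \<le> b1" "b2' \<le> b2" using ff_nat_zero[of b1 b1'] ff_nat_zero[of b2 b2'] by linarith+
        moreover have "b1 + b2 \<le> b1' + b2'" using minp[OF pk] by (simp add: h_def pe p0e)
        ultimately have "b1' = b1" "b2' = b2" by auto
        with n1 n2 have "p = p0" by (simp add: pe p0e)
        with False show False by simp
      qed
      with False show ?thesis by simp
    qed
  qed
  also have "\<dots> = Poly_Mapping.lookup c p0 * mcoef p0 x" using p0(1) by simp
  finally have "act c u x = Poly_Mapping.lookup c p0 * mcoef p0 x" .
  moreover have "mcoef p0 x \<noteq> 0" by (simp add: mcoef_def p0e x_def ff_nat_nonzero)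
  moreover have "Poly_Mapping.lookup c p0 \<noteq> 0" using p0(1) by (simp add: in_keys_iff)
  ultimately have "act c u x \<noteq> 0" by simp
  with assms show False by simp
qed

lemma act_inj:
  assumes "\<And>u x. act c u x = act d u x"
  shows "c = d"
proof -
  have "c - d = 0" by (rule act_eq_zero) (simp add: act_diff assms)
  thus ?thesis by simp
qed

lemma act_wone: "act wone u x = u x"
  by (simp add: wone_def act_single mcoef_def mpt_def)
lemma act_wy1: "act wy1 u x = u (fst x - 1, snd x)"
  by (simp add: wy1_def act_single mcoef_def mpt_def)
lemma act_wy2: "act wy2 u x = u (fst x, snd x - 1)"
  by (simp add: wy2_def act_single mcoef_def mpt_def)
lemma act_theta1: "act theta1 u x = fst x * u x"
  by (simp add: theta1_def act_single mcoef_def mpt_def ff_def)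
lemma act_theta2: "act theta2 u x = snd x * u x"
  by (simp add: theta2_def act_single mcoef_def mpt_def ff_def)
lemma act_wscale: "act (wscale r c) u x = r * act c u x"
  unfolding wscale_def act_sum act_single act_def[of c] sum_distrib_left by (simp add: mult_ac)

definition ismul :: "weyl \<Rightarrow> (complex \<times> complex \<Rightarrow> complex) \<Rightarrow> bool" where
  "ismul c h \<longleftrightarrow> (\<forall>u x. act c u x = h x * u x)"

lemma ismulD: "ismul c h \<Longrightarrow> act c u x = h x * u x" unfolding ismul_def by blast
lemma ismul_unique: "ismul c h \<Longrightarrow> ismul c k \<Longrightarrow> h x = k x"
proof -
  assume h: "ismul c h" and k: "ismul c k"
  have "act c (\<lambda>_. 1) x = h x * 1" by (rule ismulD[OF h])
  moreover have "act c (\<lambda>_. 1) x = k x * 1" by (rule ismulD[OF k])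
  ultimately show "h x = k x" by simp
qed

lemma ismul_wone: "ismul wone (\<lambda>_. 1)" by (simp add: ismul_def act_wone)
lemma ismul_theta1: "ismul theta1 fst" by (simp add: ismul_def act_theta1)
lemma ismul_theta2: "ismul theta2 snd" by (simp add: ismul_def act_theta2)
lemma ismul_add: "ismul c h \<Longrightarrow> ismul d k \<Longrightarrow> ismul (c + d) (\<lambda>x. h x + k x)"
  by (simp add: ismul_def act_add distrib_right)
lemma ismul_diff: "ismul c h \<Longrightarrow> ismul d k \<Longrightarrow> ismul (c - d) (\<lambda>x. h x - k x)"
  by (simp add: ismul_def act_diff left_diff_distrib)
lemma ismul_mult: "ismul c h \<Longrightarrow> ismul d k \<Longrightarrow> ismul (c \<star> d) (\<lambda>x. h x * k x)"
  by (simp add: ismul_def act_mult)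
lemma ismul_wscale: "ismul c h \<Longrightarrow> ismul (wscale r c) (\<lambda>x. r * h x)"
  by (simp add: ismul_def act_wscale)
lemma ismul_wpow: "ismul c h \<Longrightarrow> ismul (wpow c n) (\<lambda>x. h x ^ n)"
  by (induction n) (simp_all add: ismul_wone ismul_mult)
lemma ismul_sum: "(\<And>i. i \<in> I \<Longrightarrow> ismul (f i) (g i)) \<Longrightarrow> ismul (\<Sum>i\<in>I. f i) (\<lambda>x. \<Sum>i\<in>I. g i x)"
  by (simp add: ismul_def act_sum sum_distrib_right)

definition bpoly :: "bipoly \<Rightarrow> complex \<Rightarrow> complex \<Rightarrow> complex" where
  "bpoly P s1 s2 = (\<Sum>(i, j)\<in>Poly_Mapping.keys P. Poly_Mapping.lookup P (i, j) * (s1 ^ i * s2 ^ j))"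

lemma ismul_bieval:
  assumes "ismul x1 h1" "ismul x2 h2"
  shows "ismul (bieval P x1 x2) (\<lambda>x. bpoly P (h1 x) (h2 x))"
proof -
  have "ismul (bieval P x1 x2) (\<lambda>x. \<Sum>ij\<in>Poly_Mapping.keys P.
          (\<lambda>ij x. case ij of (i, j) \<Rightarrow> Poly_Mapping.lookup P (i, j) * (h1 x ^ i * h2 x ^ j)) ij x)"
    unfolding bieval_def
    by (rule ismul_sum) (auto intro!: ismul_wscale ismul_mult ismul_wpow assms)
  thus ?thesis unfolding bpoly_def by simp
qed

lemma ismul_ueval:
  assumes "ismul c h"
  shows "ismul (ueval f c) (\<lambda>x. poly f (h x))"
proof -
  have "ismul (ueval f c) (\<lambda>x. \<Sum>k\<le>degree f. coeff f k * h x ^ k)"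
    unfolding ueval_def by (rule ismul_sum) (auto intro!: ismul_wscale ismul_wpow assms)
  thus ?thesis by (simp add: poly_altdef)
qed

lemma bezout_resultant:
  fixes f g :: "complex poly"
  assumes "f \<noteq> 0"
  obtains A B where "\<And>z. resultant f g = poly A z * poly f z + poly B z * poly g z"
proof (cases "resultant f g = 0")
  case True
  show ?thesis by (rule that[of 0 0]) (simp add: True)
next
  case False
  hence "degree (gcd f g) = 0" using resultant_0_gcd[of f g] by simp
  then obtain c where c: "gcd f g = [:c:]" using degree0_coeffs by blast
  have "gcd f g \<noteq> 0" using assms by simp
  hence c0: "c \<noteq> 0" using c by simp
  obtain x y where xy: "x * f + y * g = gcd f g"
    using bezout_coefficients_fst_snd[of f g] by blast
  have pz: "poly x z * poly f z + poly y z * poly g z = c" for z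
    using arg_cong[OF xy, of "\<lambda>p. poly p z"] c by simp
  show ?thesis
  proof (rule that[of "smult (resultant f g / c) x" "smult (resultant f g / c) y"])
    fix z
    have "poly (smult (resultant f g / c) x) z * poly f z + poly (smult (resultant f g / c) y) z * poly g z
        = resultant f g / c * (poly x z * poly f z + poly y z * poly g z)"
      by (simp add: algebra_simps)
    also have "\<dots> = resultant f g" using pz c0 by simp
    finally show "resultant f g = poly (smult (resultant f g / c) x) z * poly f z + poly (smult (resultant f g / c) y) z * poly g z" by simp
  qed
qed

lemma act_bieval_gen: "ismul x1 h1 \<Longrightarrow> ismul x2 h2 \<Longrightarrow> act (bieval P x1 x2) u x = bpoly P (h1 x) (h2 x) * u x"
  by (rule ismulD[OF ismul_bieval])
lemma act_ueval_gen: "ismul c h \<Longrightarrow> act (ueval f c) u x = poly f (h x) * u x"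
  by (rule ismulD[OF ismul_ueval])


lemma key_identity:
  fixes R q2a q1 q1b q2 p1a p2ab p2b p1ab Aa Fa Bb Ga F0 G2 ua ub u0 uab :: complex
  assumes hq: "q2a * q1 = q1b * q2" and hc: "p1a * p2ab = p2b * p1ab" and ab: "R = Aa * Fa + Bb * Ga"
  shows "R * (q2a * (p1a * ua) - q1b * (p2b * ub)) =
    - (Bb * (q2a * (F0 * (q1 * u0) - Ga * (p1a * ua)))) -
    Aa * (p2b * (Fa * (q1b * ub) - G2 * (p1ab * uab))) +
    (Aa * (p1a * (Fa * (q2a * ua) - G2 * (p2ab * uab))) +
     Bb * (q1b * (F0 * (q2 * u0) - Ga * (p2b * ub))))"
proof -
  have "R * (q2a * (p1a * ua) - q1b * (p2b * ub)) -
    (- (Bb * (q2a * (F0 * (q1 * u0) - Ga * (p1a * ua)))) -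
    Aa * (p2b * (Fa * (q1b * ub) - G2 * (p1ab * uab))) +
    (Aa * (p1a * (Fa * (q2a * ua) - G2 * (p2ab * uab))) +
     Bb * (q1b * (F0 * (q2 * u0) - Ga * (p2b * ub)))))
    = Bb * F0 * u0 * (q2a * q1 - q1b * q2) + Aa * G2 * uab * (p1a * p2ab - p2b * p1ab)"
    unfolding ab by (simp add: algebra_simps)
  also have "\<dots> = 0"
  proof -
    have "q2a * q1 - q1b * q2 = 0" "p1a * p2ab - p2b * p1ab = 0" using hq hc by simp_all
    thus ?thesis by simp
  qed
  finally show ?thesis by simp
qed

theorem lemma11p4:
  fixes f g :: "complex poly" and P1 P2 Q1 Q2 :: bipoly
  assumes "f \<noteq> 0" and "g \<noteq> 0"
    and "degree f + bideg Q1 = degree g + bideg P1"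
    and "degree f + bideg Q2 = degree g + bideg P2"
    and "\<forall>P\<in>{P1, P2, Q1, Q2}. \<not> (\<forall>y1 y2 z1 z2. y1 * z1 + y2 * z2 = 0 \<longrightarrow>
            psymb (bieval P theta1 theta2) y1 y2 z1 z2 = 0)"
    and "(wy1 \<star> bieval P1 theta1 theta2) \<star> (wy2 \<star> bieval P2 theta1 theta2)
         - (wy2 \<star> bieval P2 theta1 theta2) \<star> (wy1 \<star> bieval P1 theta1 theta2) = 0"
    and "bieval Q2 theta1 (theta2 + wone) \<star> bieval Q1 (theta1 + wone) (theta2 + wone)
         = bieval Q1 (theta1 + wone) theta2 \<star> bieval Q2 (theta1 + wone) (theta2 + wone)"
  defines "t \<equiv> theta1 + theta2"
  defines "U1 \<equiv> ueval f t \<star> bieval Q1 theta1 theta2 - wy1 \<star> ueval g t \<star> bieval P1 theta1 theta2"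
    and "U2 \<equiv> ueval f t \<star> bieval Q2 theta1 theta2 - wy2 \<star> ueval g t \<star> bieval P2 theta1 theta2"
    and "Psi \<equiv> wy1 \<star> bieval Q2 theta1 theta2 \<star> bieval P1 theta1 theta2
              - wy2 \<star> bieval Q1 theta1 theta2 \<star> bieval P2 theta1 theta2"
  shows "wscale (resultant f g) Psi \<in> left_ideal2 U1 U2"
proof -
  have rP: "\<And>P u x. act (bieval P theta1 theta2) u x = bpoly P (fst x) (snd x) * u x"
    using act_bieval_gen[OF ismul_theta1 ismul_theta2] by simp
  have rPm1: "\<And>P u x. act (bieval P (theta1 - wone) theta2) u x = bpoly P (fst x - 1) (snd x) * u x"
    using act_bieval_gen[OF ismul_diff[OF ismul_theta1 ismul_wone] ismul_theta2] by simp
  have rPm2: "\<And>P u x. act (bieval P theta1 (theta2 - wone)) u x = bpoly P (fst x) (snd x - 1) * u x"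
    using act_bieval_gen[OF ismul_theta1 ismul_diff[OF ismul_theta2 ismul_wone]] by simp
  have rPp1: "\<And>P u x. act (bieval P (theta1 + wone) theta2) u x = bpoly P (fst x + 1) (snd x) * u x"
    using act_bieval_gen[OF ismul_add[OF ismul_theta1 ismul_wone] ismul_theta2] by simp
  have rPp2: "\<And>P u x. act (bieval P theta1 (theta2 + wone)) u x = bpoly P (fst x) (snd x + 1) * u x"
    using act_bieval_gen[OF ismul_theta1 ismul_add[OF ismul_theta2 ismul_wone]] by simp
  have rPp12: "\<And>P u x. act (bieval P (theta1 + wone) (theta2 + wone)) u x = bpoly P (fst x + 1) (snd x + 1) * u x"
    using act_bieval_gen[OF ismul_add[OF ismul_theta1 ismul_wone] ismul_add[OF ismul_theta2 ismul_wone]] by simp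
  have rU: "\<And>f u x. act (ueval f (theta1 + theta2)) u x = poly f (fst x + snd x) * u x"
    using act_ueval_gen[OF ismul_add[OF ismul_theta1 ismul_theta2]] by simp
  have rUm: "\<And>f u x. act (ueval f (theta1 + theta2 - wone)) u x = poly f (fst x + snd x - 1) * u x"
    using act_ueval_gen[OF ismul_diff[OF ismul_add[OF ismul_theta1 ismul_theta2] ismul_wone]] by simp
  note rules = rP rPm1 rPm2 rPp1 rPp2 rPp12 rU rUm act_mult act_add act_diff act_uminus act_wscale act_wy1 act_wy2
  have Hq: "bpoly Q2 s1 (s2 + 1) * bpoly Q1 (s1 + 1) (s2 + 1) = bpoly Q1 (s1 + 1) s2 * bpoly Q2 (s1 + 1) (s2 + 1)" for s1 s2
  proof -
    have "act (bieval Q2 theta1 (theta2 + wone) \<star> bieval Q1 (theta1 + wone) (theta2 + wone)) (\<lambda>_. 1) (s1, s2)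
        = act (bieval Q1 (theta1 + wone) theta2 \<star> bieval Q2 (theta1 + wone) (theta2 + wone)) (\<lambda>_. 1) (s1, s2)"
      using assms(7) by simp
    thus ?thesis by (simp add: rules)
  qed
  have Hc: "bpoly P1 (s1 - 1) s2 * bpoly P2 (s1 - 1) (s2 - 1) = bpoly P2 s1 (s2 - 1) * bpoly P1 (s1 - 1) (s2 - 1)" for s1 s2
  proof -
    have "act ((wy1 \<star> bieval P1 theta1 theta2) \<star> (wy2 \<star> bieval P2 theta1 theta2)
         - (wy2 \<star> bieval P2 theta1 theta2) \<star> (wy1 \<star> bieval P1 theta1 theta2)) (\<lambda>_. 1) (s1, s2) = 0"
      using assms(6) by simp
    thus ?thesis by (simp add: rules)
  qed
  obtain A B where AB: "\<And>z. resultant f g = poly A z * poly f z + poly B z * poly g z"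
    using bezout_resultant[OF assms(1)] by blast
  define Z1 where "Z1 = ueval B (t - wone) \<star> bieval Q2 (theta1 - wone) theta2"
  define Z2 where "Z2 = ueval B (t - wone) \<star> bieval Q1 theta1 (theta2 - wone)"
  define A1 where "A1 = - (Z1 + wy2 \<star> ueval A t \<star> bieval P2 theta1 theta2)"
  define B1 where "B1 = wy1 \<star> ueval A t \<star> bieval P1 theta1 theta2 + Z2"
  have "wscale (resultant f g) Psi = A1 \<star> U1 + B1 \<star> U2"
  proof (rule act_inj)
    fix u and x :: "complex \<times> complex"
    obtain x1 x2 where x: "x = (x1, x2)" by (cases x)
    show "act (wscale (resultant f g) Psi) u x = act (A1 \<star> U1 + B1 \<star> U2) u x"
    proof -
      have e1: "x1 - 1 + x2 = x1 + x2 - 1" and e2: "x1 + (x2 - 1) = x1 + x2 - 1" by simp_all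
      have hq: "bpoly Q2 (x1 - 1) x2 * bpoly Q1 x1 x2 = bpoly Q1 x1 (x2 - 1) * bpoly Q2 x1 x2"
        using Hq[of "x1 - 1" "x2 - 1"] by simp
      have hc: "bpoly P1 (x1 - 1) x2 * bpoly P2 (x1 - 1) (x2 - 1) = bpoly P2 x1 (x2 - 1) * bpoly P1 (x1 - 1) (x2 - 1)"
        by (rule Hc)
      have ab: "resultant f g = poly A (x1 + x2 - 1) * poly f (x1 + x2 - 1) + poly B (x1 + x2 - 1) * poly g (x1 + x2 - 1)"
        by (rule AB)
      show ?thesis
        unfolding x A1_def B1_def Z1_def Z2_def U1_def U2_def Psi_def t_def
        apply (simp add: rules e1 e2)
        by (rule key_identity[OF hq hc ab])
    qed
  qed
  thus ?thesis unfolding left_ideal2_def by blast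
qed

end
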